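(* The following are equivalent: (a) $\mathbf{0}\in\mathrm{conv}\,\chi$; (b) for every $\mathbf{x}_i\in\chi$ and every $\mathbf{x}\in\mathcal{D}_{i,\mathrm{DP}}$ one has $\|\mathbf{x}\|\ge\|\mathbf{x}_i\|$. Moreover, when $\mathbf{0}\in\mathrm{conv}\,\chi$, equality $\|\mathbf{x}\|=\|\mathbf{x}_i\|$ with $\mathbf{x}\in\mathcal{D}_{i,\mathrm{DP}}$ holds only for $\mathbf{x}=\mathbf{x}_i$.
   Context: A constellation is a finite set $\chi=\{\mathbf{x}_1,\dots,\mathbf{x}_M\}\subset\mathbb{R}^2$ of distinct points, $M\ge 3$, not all lying on one line. The Voronoi region of $\mathbf{x}_i$ is $\mathcal{D}_{i,\mathrm{ML}}=\{\mathbf{x}\in\mathbb{R}^2:\|\mathbf{x}-\mathbf{x}_i\|\le\|\mathbf{x}-\mathbf{x}_j\|\ \forall j\}$. Two distinct points $\mathbf{x}_i,\mathbf{x}_j$ are neighbors if their Voronoi regions share an edge (a common boundary segment or ray of positive length); $\mathcal{S}_i$ denotes the set of neighbors of $\mathbf{x}_i$. The distance preserving constructive interference region (DPCIR) of $\mathbf{x}_i$ is $\mathcal{D}_{i,\mathrm{DP}}=\{\mathbf{x}\in\mathbb{R}^2:(\mathbf{x}_i-\mathbf{x}_j)^T\mathbf{x}\ge (\mathbf{x}_i-\mathbf{x}_j)^T(\mathbf{x}_i+\mathbf{x}_j)/2+\|\mathbf{x}_i-\mathbf{x}_j\|^2/2\ \forall\mathbf{x}_j\in\mathcal{S}_i\}$,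 equivalently $\{\mathbf{x}:(\mathbf{x}_i-\mathbf{x}_j)^T(\mathbf{x}-\mathbf{x}_i)\ge 0\ \forall\mathbf{x}_j\in\mathcal{S}_i\}$. $\mathrm{conv}\,\chi$ is the convex hull of $\chi$. *)

theory Defs
  imports "HOL-Analysis.Analysis"
begin

definition constellation :: "(real^2) set \<Rightarrow> bool" where
  "constellation X \<longleftrightarrow> finite X \<and> card X \<ge> 3 \<and> \<not> collinear X"

definition voronoi :: "(real^2) set \<Rightarrow> real^2 \<Rightarrow> (real^2) set" where
  "voronoi X xi = {x. \<forall>xj\<in>X. norm (x - xi) \<le> norm (x - xj)}"

text \<open>Two distinct points are neighbours if their Voronoi regions share a boundary
  piece of positive length, i.e. the (convex) common part contains a nondegenerate
  segment, equivalently two distinct points.\<close>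
definition neighbors :: "(real^2) set \<Rightarrow> real^2 \<Rightarrow> real^2 \<Rightarrow> bool" where
  "neighbors X xi xj \<longleftrightarrow> xi \<noteq> xj \<and>
     (\<exists>a b. a \<noteq> b \<and> closed_segment a b \<subseteq> voronoi X xi \<inter> voronoi X xj)"

definition neighbor_set :: "(real^2) set \<Rightarrow> real^2 \<Rightarrow> (real^2) set" where
  "neighbor_set X xi = {xj \<in> X. neighbors X xi xj}"

definition dpcir :: "(real^2) set \<Rightarrow> real^2 \<Rightarrow> (real^2) set" where
  "dpcir X xi = {x. \<forall>xj\<in>neighbor_set X xi.
      (xi - xj) \<bullet> x \<ge> (xi - xj) \<bullet> (xi + xj) / 2 + (norm (xi - xj))\<^sup>2 / 2}"

end

theory Submission
  imports Defs
begin

definition gg :: "real^2 \<Rightarrow> real^2 \<Rightarrow> real^2 \<Rightarrow> real" where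
  "gg xi k y = 2 * ((xi - k) \<bullet> (y - xi)) + (norm (xi - k))^2"

lemma sq_expand: "(norm (y - k))^2 = (norm (y - xi))^2 + gg xi k y"
proof -
  have g: "(norm (a + b))^2 = (norm a)^2 + 2 * (b \<bullet> a) + (norm b)^2" for a b :: "real^2"
    unfolding power2_norm_eq_inner by (simp add: inner_add inner_commute)
  have "y - k = (y - xi) + (xi - k)" by simp
  hence "(norm (y - k))^2 = (norm ((y - xi) + (xi - k)))^2" by simp
  also have "\<dots> = (norm (y - xi))^2 + 2 * ((xi - k) \<bullet> (y - xi)) + (norm (xi - k))^2"
    by (rule g)
  finally show ?thesis by (simp add: gg_def)
qed

lemma gg_add: "gg xi k (y + t *\<^sub>R w) = gg xi k y + 2 * t * ((xi - k) \<bullet> w)"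
  unfolding gg_def by (simp add: inner_diff_right inner_add_right algebra_simps)

lemma gg_self [simp]: "gg xi xi y = 0"
  by (simp add: gg_def)

lemma norm_le_iff_sq: "norm a \<le> norm b \<longleftrightarrow> (norm a)^2 \<le> (norm b)^2"
  by (simp add: abs_le_square_iff[symmetric])

lemma vor_iff: "y \<in> voronoi X xi \<longleftrightarrow> (\<forall>k\<in>X. 0 \<le> gg xi k y)"
  unfolding voronoi_def using sq_expand norm_le_iff_sq
  by (smt (verit, best) mem_Collect_eq)

lemma tight_iff: "gg xi k y = 0 \<longleftrightarrow> norm (y - xi) = norm (y - k)"
proof -
  have "norm (y - xi) = norm (y - k) \<longleftrightarrow> (norm (y - xi))^2 = (norm (y - k))^2"
    by (metis norm_ge_zero power2_eq_iff_nonneg)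
  then show ?thesis using sq_expand[of y k xi] by linarith
qed

lemma dpcir_iff: "x \<in> dpcir X xi \<longleftrightarrow> (\<forall>j\<in>neighbor_set X xi. 0 \<le> (xi - j) \<bullet> (x - xi))"
proof -
  have "(xi - j) \<bullet> (xi + j) / 2 + (norm (xi - j))\<^sup>2 / 2 = (xi - j) \<bullet> xi" for j
    unfolding power2_norm_eq_inner by (simp add: inner_add inner_diff inner_commute field_simps)
  then show ?thesis unfolding dpcir_def by (auto simp: inner_diff_right)
qed

lemma min_ratio:
  fixes \<alpha> \<beta> :: "'a \<Rightarrow> real"
  assumes "finite I" "\<forall>k\<in>I. \<alpha> k > 0" "k0 \<in> I" "\<beta> k0 < 0"
  obtains s j where "s > 0" "j \<in> I" "\<beta> j < 0" "\<alpha> j + s * \<beta> j = 0"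
    "\<forall>k\<in>I. 0 \<le> \<alpha> k + s * \<beta> k" "s \<le> \<alpha> k0 / (- \<beta> k0)"
proof -
  let ?J = "{k\<in>I. \<beta> k < 0}"
  let ?R = "(\<lambda>k. \<alpha> k / (- \<beta> k)) ` ?J"
  have fin: "finite ?R" using assms(1) by simp
  have ne: "?R \<noteq> {}" using assms(3,4) by blast
  obtain j where j: "j \<in> ?J" "Min ?R = \<alpha> j / (- \<beta> j)"
    using Min_in[OF fin ne] by auto
  define s where "s = Min ?R"
  have le: "s \<le> \<alpha> k / (- \<beta> k)" if "k \<in> ?J" for k
    unfolding s_def using that fin by (intro Min_le) auto
  have spos: "s > 0" using j assms(2) s_def by (auto simp: divide_less_0_iff)
  have "\<alpha> j + s * \<beta> j = 0" using j s_def by (auto simp: field_simps)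
  moreover have "0 \<le> \<alpha> k + s * \<beta> k" if "k \<in> I" for k
  proof (cases "\<beta> k < 0")
    case True
    then have "s \<le> \<alpha> k / (- \<beta> k)" using le that by auto
    then have "s * (- \<beta> k) \<le> \<alpha> k" using True pos_le_divide_eq[of "- \<beta> k" s "\<alpha> k"] by linarith
    then show ?thesis by (simp add: algebra_simps)
  next
    case False
    then show ?thesis using spos assms(2) that
      by (smt (verit) mult_nonneg_nonneg)
  qed
  moreover have "s \<le> \<alpha> k0 / (- \<beta> k0)" using le assms(3,4) by auto
  ultimately show ?thesis using that spos j by auto
qed

lemma perp2:
  fixes u :: "real^2"
  assumes "u \<noteq> 0"
  obtains v :: "real^2" where "v \<noteq> 0" "u \<bullet> v = 0"
proof -
  define v :: "real^2" where "v = vector [-(u$2), u$1]"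
  have "u \<bullet> v = 0" unfolding v_def by (simp add: inner_vec_def sum_2)
  moreover have "v \<noteq> 0"
  proof
    assume "v = 0"
    then have "u$1 = 0" "u$2 = 0" unfolding v_def by (auto simp: vec_eq_iff forall_2)
    then have "u = 0" by (auto simp: vec_eq_iff forall_2)
    with assms show False by simp
  qed
  ultimately show ?thesis using that by blast
qed

lemma seg_from_dir:
  assumes "finite X" "xi \<in> X" "p \<in> voronoi X xi" "j \<in> X" "w \<noteq> 0"
    "gg xi j p = 0" "(xi - j) \<bullet> w = 0"
    "\<forall>k\<in>X. k \<noteq> xi \<longrightarrow> gg xi k p = 0 \<longrightarrow> 0 \<le> (xi - k) \<bullet> w"
  shows "\<exists>a b. a \<noteq> b \<and> closed_segment a b \<subseteq> voronoi X xi \<inter> voronoi X j"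
proof -
  have gp: "\<forall>k\<in>X. 0 \<le> gg xi k p" using assms(3) vor_iff by blast
  define c where "c k = (xi - k) \<bullet> w" for k
  define R where "R = (\<lambda>k. gg xi k p / (2 * \<bar>c k\<bar> + 1)) ` {k\<in>X. gg xi k p \<noteq> 0}"
  define e where "e = Min (insert 1 R)"
  have finR: "finite R" unfolding R_def using assms(1) by simp
  have Rpos: "\<forall>r\<in>R. 0 < r" unfolding R_def using gp
    by (auto intro!: divide_pos_pos)
  have epos: "0 < e" unfolding e_def using finR Rpos by (subst Min_gr_iff) auto
  have ele: "e \<le> gg xi k p / (2 * \<bar>c k\<bar> + 1)" if "k \<in> X" "gg xi k p \<noteq> 0" for k
    unfolding e_def using finR that by (intro Min_le) (auto simp: R_def)
  have ycase: "p + t *\<^sub>R w \<in> voronoi X xi \<inter> voronoi X j" if t: "0 \<le> t" "t \<le> e" for t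
  proof -
    let ?y = "p + t *\<^sub>R w"
    have gy: "0 \<le> gg xi k ?y" if k: "k \<in> X" for k
    proof (cases "gg xi k p = 0")
      case True
      show ?thesis
      proof (cases "k = xi")
        case False
        then have "0 \<le> c k" using assms(8) k True c_def by auto
        then show ?thesis using True gg_add[of xi k p t w] t c_def by simp
      qed simp
    next
      case False
      have pos: "0 < 2 * \<bar>c k\<bar> + 1" using abs_ge_zero[of "c k"] by linarith
      have "e * (2 * \<bar>c k\<bar> + 1) \<le> gg xi k p"
        using ele[OF k False] pos by (simp add: le_divide_eq)
      moreover have "t * (2 * \<bar>c k\<bar>) \<le> e * (2 * \<bar>c k\<bar> + 1)"
      proof -
        have "t * (2 * \<bar>c k\<bar>) \<le> e * (2 * \<bar>c k\<bar>)"
          using t by (intro mult_right_mono) auto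
        then show ?thesis using epos by (simp add: algebra_simps)
      qed
      moreover have "- (t * (2 * \<bar>c k\<bar>)) \<le> 2 * t * c k"
      proof -
        have "2 * t * (- \<bar>c k\<bar>) \<le> 2 * t * c k"
          using t by (intro mult_left_mono) auto
        then show ?thesis by simp
      qed
      moreover have "gg xi k ?y = gg xi k p + 2 * t * c k" using gg_add[of xi k p t w] c_def by simp
      ultimately show ?thesis by linarith
    qed
    then have yv: "?y \<in> voronoi X xi" using vor_iff by blast
    have "gg xi j ?y = 0" using gg_add[of xi j p t w] assms(6,7) by simp
    then have eq: "norm (?y - xi) = norm (?y - j)" using tight_iff by blast
    have "?y \<in> voronoi X j" using yv eq unfolding voronoi_def by auto
    with yv show ?thesis by blast
  qed
  have "closed_segment p (p + e *\<^sub>R w) \<subseteq> voronoi X xi \<inter> voronoi X j"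
  proof
    fix x assume "x \<in> closed_segment p (p + e *\<^sub>R w)"
    then obtain u where u: "0 \<le> u" "u \<le> 1" "x = (1 - u) *\<^sub>R p + u *\<^sub>R (p + e *\<^sub>R w)"
      by (auto simp: in_segment)
    have "x = p + (u * e) *\<^sub>R w" using u(3) by (simp add: algebra_simps)
    moreover have "0 \<le> u * e" "u * e \<le> e" using u epos by (auto simp: mult_left_le_one_le)
    ultimately show "x \<in> voronoi X xi \<inter> voronoi X j" using ycase by simp
  qed
  moreover have "p \<noteq> p + e *\<^sub>R w" using epos assms(5) by simp
  ultimately show ?thesis by blast
qed


lemma tight_neighbor:
  assumes "finite X" "xi \<in> X" "p \<in> voronoi X xi" "j0 \<in> X" "j0 \<noteq> xi" "gg xi j0 p = 0"
  shows "\<exists>j\<in>X. j \<noteq> xi \<and> gg xi j p = 0 \<and> neighbors X xi j"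
proof -
  define T where "T = {k\<in>X. k \<noteq> xi \<and> gg xi k p = 0}"
  define u0 where "u0 = xi - p"
  have Tpos: "0 < (xi - k) \<bullet> u0" if "k \<in> T" for k
  proof -
    have h: "gg xi k p = 0" "k \<noteq> xi" using that unfolding T_def by auto
    have "2 * ((xi - k) \<bullet> (p - xi)) + (norm (xi - k))^2 = 0" using h(1) unfolding gg_def .
    moreover have "0 < (norm (xi - k))^2" using h(2) by simp
    moreover have "p - xi = - u0" unfolding u0_def by simp
    then have "(xi - k) \<bullet> (p - xi) = - ((xi - k) \<bullet> u0)" by simp
    ultimately show ?thesis by linarith
  qed
  have j0T: "j0 \<in> T" using assms T_def by auto
  have "u0 \<noteq> 0"
  proof
    assume "u0 = 0"
    then have "p = xi" by (simp add: u0_def)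
    then show False using assms(5,6) by (simp add: gg_def)
  qed
  then obtain v where v: "v \<noteq> 0" "u0 \<bullet> v = 0" by (rule perp2)
  obtain w j where w: "w \<noteq> 0" "j \<in> T" "(xi - j) \<bullet> w = 0" "\<forall>k\<in>T. 0 \<le> (xi - k) \<bullet> w"
  proof (cases "\<forall>k\<in>T. (xi - k) \<bullet> v = 0")
    case True
    show ?thesis by (rule that[of v j0]) (use v j0T True in auto)
  next
    case False
    then obtain k1 where k1: "k1 \<in> T" "(xi - k1) \<bullet> v \<noteq> 0" by blast
    define v' where "v' = (if (xi - k1) \<bullet> v < 0 then v else - v)"
    have k1n: "(xi - k1) \<bullet> v' < 0" using k1(2) unfolding v'_def by auto
    have uv': "u0 \<bullet> v' = 0" using v(2) unfolding v'_def by auto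
    have finT: "finite T" using assms(1) T_def by simp
    obtain s j where sj: "s > 0" "j \<in> T" "(xi - j) \<bullet> v' < 0"
      "(xi - j) \<bullet> u0 + s * ((xi - j) \<bullet> v') = 0"
      "\<forall>k\<in>T. 0 \<le> (xi - k) \<bullet> u0 + s * ((xi - k) \<bullet> v')"
      "s \<le> (xi - k1) \<bullet> u0 / (- ((xi - k1) \<bullet> v'))"
    proof (rule min_ratio[of T "\<lambda>k. (xi - k) \<bullet> u0" k1 "\<lambda>k. (xi - k) \<bullet> v'"])
      show "finite T" by (rule finT)
      show "\<forall>k\<in>T. 0 < (xi - k) \<bullet> u0" using Tpos by blast
      show "k1 \<in> T" by (rule k1(1))
      show "(xi - k1) \<bullet> v' < 0" by (rule k1n)
    qed
    define w where "w = u0 + s *\<^sub>R v'"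
    have iw: "(xi - k) \<bullet> w = (xi - k) \<bullet> u0 + s * ((xi - k) \<bullet> v')" for k
      unfolding w_def by (simp add: inner_add_right)
    have "u0 \<bullet> w = u0 \<bullet> u0" unfolding w_def using uv' by (simp add: inner_add_right)
    then have "w \<noteq> 0" using \<open>u0 \<noteq> 0\<close> by auto
    then show ?thesis by (rule that[of w j]) (use sj iw in auto)
  qed
  have jX: "j \<in> X" "j \<noteq> xi" "gg xi j p = 0" using w(2) unfolding T_def by auto
  have "\<exists>a b. a \<noteq> b \<and> closed_segment a b \<subseteq> voronoi X xi \<inter> voronoi X j"
  proof (rule seg_from_dir[OF assms(1,2,3) jX(1) w(1) jX(3) w(3)])
    show "\<forall>k\<in>X. k \<noteq> xi \<longrightarrow> gg xi k p = 0 \<longrightarrow> 0 \<le> (xi - k) \<bullet> w"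
      using w(4) unfolding T_def by blast
  qed
  then have "neighbors X xi j" unfolding neighbors_def using jX(2) by auto
  then show ?thesis using jX by blast
qed

lemma Q_sub_P:
  assumes "finite X" "xi \<in> X" "\<forall>j\<in>neighbor_set X xi. 0 \<le> gg xi j z"
  shows "z \<in> voronoi X xi"
proof (rule ccontr)
  assume "z \<notin> voronoi X xi"
  then obtain k0 where k0: "k0 \<in> X" "gg xi k0 z < 0" using vor_iff by (meson not_le)
  have k0ne: "k0 \<noteq> xi" using k0 by auto
  define u where "u = z - xi"
  define I where "I = X - {xi}"
  define \<alpha> where "\<alpha> k = (norm (xi - k))^2" for k
  define \<beta> where "\<beta> k = 2 * ((xi - k) \<bullet> u)" for k
  have galong: "gg xi k (xi + t *\<^sub>R u) = \<alpha> k + t * \<beta> k" for k t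
    using gg_add[of xi k xi t u] unfolding \<alpha>_def \<beta>_def by (simp add: gg_def)
  have gz: "gg xi k z = \<alpha> k + \<beta> k" for k
    using galong[of k 1] unfolding u_def by simp
  have apos: "\<forall>k\<in>I. \<alpha> k > 0" unfolding I_def \<alpha>_def by auto
  have k0I: "k0 \<in> I" using k0 k0ne I_def by auto
  have bk0: "\<beta> k0 < 0" using apos k0I k0(2) gz[of k0] by fastforce
  obtain s j where sj: "s > 0" "j \<in> I" "\<beta> j < 0" "\<alpha> j + s * \<beta> j = 0"
    "\<forall>k\<in>I. 0 \<le> \<alpha> k + s * \<beta> k" "s \<le> \<alpha> k0 / (- \<beta> k0)"
  proof (rule min_ratio[of I \<alpha> k0 \<beta>])
    show "finite I" using assms(1) unfolding I_def by simp
  qed (use apos k0I bk0 in auto)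
  have "\<alpha> k0 / (- \<beta> k0) < 1" using k0(2) gz[of k0] bk0 pos_divide_less_eq[of "- \<beta> k0" "\<alpha> k0" 1] by linarith
  then have s1: "s < 1" using sj(6) by linarith
  define p where "p = xi + s *\<^sub>R u"
  have pv: "p \<in> voronoi X xi"
    unfolding vor_iff
  proof
    fix k assume "k \<in> X"
    show "0 \<le> gg xi k p"
    proof (cases "k = xi")
      case False
      then have "k \<in> I" using \<open>k \<in> X\<close> unfolding I_def by blast
      then show ?thesis unfolding p_def galong using sj(5) by blast
    qed simp
  qed
  have "gg xi j p = 0" unfolding p_def galong using sj(4) .
  then obtain j' where j': "j' \<in> X" "j' \<noteq> xi" "gg xi j' p = 0" "neighbors X xi j'"
    using tight_neighbor[OF assms(1,2) pv, of j] sj(2) \<open>gg xi j p = 0\<close> unfolding I_def by blast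
  have "\<alpha> j' + s * \<beta> j' = 0" using j'(3) unfolding p_def galong .
  moreover have "\<alpha> j' > 0" using j'(2) unfolding \<alpha>_def by simp
  ultimately have "s * \<beta> j' < 0" by linarith
  then have bj: "\<beta> j' < 0" using sj(1) by (simp add: mult_less_0_iff)
  have "(1 - s) * \<beta> j' < 0" using s1 bj by (simp add: mult_pos_neg)
  moreover have "gg xi j' z = (\<alpha> j' + s * \<beta> j') + (1 - s) * \<beta> j'"
    using gz[of j'] by (simp add: algebra_simps)
  ultimately have "gg xi j' z < 0" using \<open>\<alpha> j' + s * \<beta> j' = 0\<close> by linarith
  moreover have "j' \<in> neighbor_set X xi" using j' unfolding neighbor_set_def by auto
  then have "0 \<le> gg xi j' z" using assms(3) by blast
  with \<open>gg xi j' z < 0\<close> show False by linarith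
qed


lemma dir_all:
  assumes "finite X" "xi \<in> X" "x \<in> dpcir X xi" "k \<in> X"
  shows "0 \<le> (xi - k) \<bullet> (x - xi)"
proof (rule ccontr)
  define d where "d = x - xi"
  assume "\<not> 0 \<le> (xi - k) \<bullet> (x - xi)"
  then have c: "(xi - k) \<bullet> d < 0" unfolding d_def by simp
  have along: "gg xi j (xi + t *\<^sub>R d) = (norm (xi - j))^2 + 2 * t * ((xi - j) \<bullet> d)" for j t
    using gg_add[of xi j xi t d] by (simp add: gg_def)
  define t where "t = ((norm (xi - k))^2 + 1) / (- 2 * ((xi - k) \<bullet> d))"
  have t0: "0 \<le> t" unfolding t_def using c by (intro divide_nonneg_pos) auto
  have nb: "\<forall>j\<in>neighbor_set X xi. 0 \<le> gg xi j (xi + t *\<^sub>R d)"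
  proof
    fix j assume "j \<in> neighbor_set X xi"
    then have "0 \<le> (xi - j) \<bullet> d" using assms(3) unfolding dpcir_iff d_def by blast
    then have "0 \<le> 2 * t * ((xi - j) \<bullet> d)" using t0 by simp
    then show "0 \<le> gg xi j (xi + t *\<^sub>R d)" unfolding along
      using zero_le_power2[of "norm (xi - j)"] by linarith
  qed
  have "xi + t *\<^sub>R d \<in> voronoi X xi" by (rule Q_sub_P[OF assms(1,2) nb])
  then have "0 \<le> gg xi k (xi + t *\<^sub>R d)" using assms(4) vor_iff by blast
  moreover have "2 * t * ((xi - k) \<bullet> d) = - ((norm (xi - k))^2 + 1)"
    unfolding t_def using c by (simp add: field_simps)
  ultimately show False unfolding along by linarith
qed

theorem lemma3:
  fixes X :: "(real^2) set"
  assumes "constellation X"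
  shows "((0::real^2) \<in> convex hull X \<longleftrightarrow>
           (\<forall>xi\<in>X. \<forall>x\<in>dpcir X xi. norm x \<ge> norm xi))
       \<and> ((0::real^2) \<in> convex hull X \<longrightarrow>
           (\<forall>xi\<in>X. \<forall>x\<in>dpcir X xi. norm x = norm xi \<longrightarrow> x = xi))"
proof -
  have fin: "finite X" and cardX: "card X \<ge> 3" using assms unfolding constellation_def by auto
  have ne: "X \<noteq> {}" using cardX by auto
  have key: "(norm xi)^2 \<le> (norm x)^2 \<and> ((norm x)^2 = (norm xi)^2 \<longrightarrow> x = xi)"
    if h0: "0 \<in> convex hull X" and xi: "xi \<in> X" and x: "x \<in> dpcir X xi" for xi x
  proof -
    define d where "d = x - xi"
    have "X \<subseteq> {y. inner d y \<le> d \<bullet> xi}"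
    proof
      fix k assume "k \<in> X"
      then have "0 \<le> (xi - k) \<bullet> d" using dir_all[OF fin xi x] unfolding d_def by blast
      then show "k \<in> {y. inner d y \<le> d \<bullet> xi}" by (simp add: inner_diff_left inner_diff_right inner_commute)
    qed
    then have "convex hull X \<subseteq> {y. inner d y \<le> d \<bullet> xi}"
      by (rule hull_minimal) (rule convex_halfspace_le)
    then have dxi: "0 \<le> d \<bullet> xi" using h0 by auto
    have xe: "x = xi + d" unfolding d_def by simp
    have "(norm x)^2 = (norm xi)^2 + 2 * (d \<bullet> xi) + (norm d)^2"
      unfolding xe power2_norm_eq_inner by (simp add: inner_add inner_commute)
    moreover have "0 \<le> (norm d)^2" by simp
    moreover have "(norm d)^2 = 0 \<longleftrightarrow> x = xi" unfolding d_def by simp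
    ultimately show ?thesis using dxi by (smt (verit))
  qed
  have A: "0 \<in> convex hull X \<Longrightarrow> \<forall>xi\<in>X. \<forall>x\<in>dpcir X xi. norm x \<ge> norm xi"
    using key by (meson norm_le_iff_sq)
  have B: "0 \<in> convex hull X \<Longrightarrow> \<forall>xi\<in>X. \<forall>x\<in>dpcir X xi. norm x = norm xi \<longrightarrow> x = xi"
    using key by metis
  have C: "0 \<in> convex hull X" if H: "\<forall>xi\<in>X. \<forall>x\<in>dpcir X xi. norm x \<ge> norm xi"
  proof (rule ccontr)
    assume n0: "0 \<notin> convex hull X"
    have "closed (convex hull X)"
      using fin by (simp add: compact_imp_closed compact_convex_hull finite_imp_compact)
    then obtain a b where ab: "a \<noteq> 0" "0 < b" "\<forall>y\<in>convex hull X. inner a y > b"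
      using separating_hyperplane_closed_0[OF convex_convex_hull _ n0] by blast
    define m where "m = Min ((\<lambda>y. inner a y) ` X)"
    have "m \<in> (\<lambda>y. inner a y) ` X" unfolding m_def using fin ne by (intro Min_in) auto
    then obtain xi where xi: "xi \<in> X" "inner a xi = m" by auto
    have mle: "m \<le> inner a y" if "y \<in> X" for y unfolding m_def using fin that by (intro Min_le) auto
    have axi: "inner a xi > 0" using ab xi(1) hull_subset[of X convex] by force
    have aa: "inner a a > 0" using ab(1) by simp
    define t where "t = inner a xi / inner a a"
    have tpos: "t > 0" unfolding t_def using axi aa by simp
    define x where "x = xi - t *\<^sub>R a"
    have "x \<in> dpcir X xi" unfolding dpcir_iff
    proof
      fix j assume "j \<in> neighbor_set X xi"
      then have "j \<in> X" unfolding neighbor_set_def by blast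
      then have "inner a xi \<le> inner a j" using mle xi(2) by simp
      then have "0 \<le> t * (inner a j - inner a xi)" using tpos by simp
      moreover have "(xi - j) \<bullet> (x - xi) = t * (inner a j - inner a xi)"
        unfolding x_def by (simp add: inner_diff_left inner_commute algebra_simps)
      ultimately show "0 \<le> (xi - j) \<bullet> (x - xi)" by simp
    qed
    then have ge: "norm x \<ge> norm xi" using H xi(1) by blast
    have "(norm x)^2 = (norm xi)^2 - 2 * t * inner a xi + t^2 * inner a a"
      unfolding x_def power2_norm_eq_inner
      by (simp add: inner_diff inner_commute algebra_simps power2_eq_square)
    also have "t^2 * inner a a = t * inner a xi"
      unfolding t_def using aa by (simp add: power2_eq_square field_simps)
    finally have "(norm x)^2 = (norm xi)^2 - t * inner a xi" by simp
    moreover have "t * inner a xi > 0" using tpos axi by simp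
    ultimately have "(norm x)^2 < (norm xi)^2" by linarith
    then have "norm x < norm xi" using norm_le_iff_sq[of xi x] by linarith
    then show False using ge by simp
  qed
  show ?thesis using A B C by blast
qed

end
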